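(* Consider the $2$-user symmetric linear deterministic Z interference channel with unidirectional, rate-limited transmitter cooperation of capacity $C$ (any nonnegative integer) from transmitter $2$ to transmitter $1$, with integer parameters $m\ge1$, $n\ge0$, and suppose $\alpha\ge 2$, where $\alpha=n/m$. Then the secrecy capacity region (under the perfect secrecy constraint) is the set of all $(R_1,R_2)$ with $0\le R_1\le m$ and $R_2=0$.
   Context: Model: let $q=\max\{m,n\}$ and let $\mathbf{D}$ be the $q\times q$ downshift matrix over $\mathbb{F}_2$ (entries $d_{j',j''}=1$ if $2\le j'=j''+1\le q$, and $0$ otherwise). At each channel use, transmitter $i$ sends $\mathbf{x}_i\in\mathbb{F}_2^q$, and the outputs are $\mathbf{y}_1=\mathbf{D}^{q-m}\mathbf{x}_1\oplus\mathbf{D}^{q-n}\mathbf{x}_2$ and $\mathbf{y}_2=\mathbf{D}^{q-m}\mathbf{x}_2$, where $\oplus$ is componentwise addition mod $2$. Transmitter $i$ has a message $W_i$ uniform on $\{1,\dots,2^{NR_i}\}$ ($N$ = block length, rates in bits per channel use). Transmitter $2$ can send to transmitter $1$, over a noiseless secure link, at most $C$ bits per channel use; transmitter $2$'s signal depends only on $W_2$ (and possibly its own randomness), while transmitter $1$'s signal at each time is a function of $W_1$, the bits received so far over the cooperative link (causality), and possibly locally generated random bits. Receiver $i$ decodes $W_i$ from $\mathbf{y}_i^N$. A rate pair is achievable with perfect secrecy if there are such codes with decoding error probability tending to $0$ as $N\to\infty$ and $I(W_i;\mathbf{y}_j^N)=0$ for $i\neq j$. The secrecy capacity region is the closure of the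 set of achievable rate pairs. *)

theory Defs
  imports "HOL-Analysis.Analysis" "HOL-Probability.Probability_Mass_Function" "HOL-Library.Z2"
begin

text \<open>Vectors over F_2 of length q are functions nat => bit, coordinates 1..q
  (coordinates outside 1..q are ignored by all matrix operations below).
  q x q matrices over F_2 are functions nat => nat => bit, indices 1..q.\<close>

definition downshift :: "nat \<Rightarrow> nat \<Rightarrow> nat \<Rightarrow> bit" where
  "downshift q j' j'' = (if 2 \<le> j' \<and> j' = j'' + 1 \<and> j' \<le> q then 1 else 0)"

definition mat_id :: "nat \<Rightarrow> nat \<Rightarrow> bit" where
  "mat_id i j = (if i = j then 1 else 0)"

definition mat_mult :: "nat \<Rightarrow> (nat \<Rightarrow> nat \<Rightarrow> bit) \<Rightarrow> (nat \<Rightarrow> nat \<Rightarrow> bit) \<Rightarrow> nat \<Rightarrow> nat \<Rightarrow> bit" where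
  "mat_mult q A B i k = (\<Sum>j\<in>{1..q}. A i j * B j k)"

fun mat_pow :: "nat \<Rightarrow> (nat \<Rightarrow> nat \<Rightarrow> bit) \<Rightarrow> nat \<Rightarrow> nat \<Rightarrow> nat \<Rightarrow> bit" where
  "mat_pow q A 0 = mat_id"
| "mat_pow q A (Suc k) = mat_mult q A (mat_pow q A k)"

definition mat_vec :: "nat \<Rightarrow> (nat \<Rightarrow> nat \<Rightarrow> bit) \<Rightarrow> (nat \<Rightarrow> bit) \<Rightarrow> nat \<Rightarrow> bit" where
  "mat_vec q A x i = (\<Sum>j\<in>{1..q}. A i j * x j)"

definition out1 :: "nat \<Rightarrow> nat \<Rightarrow> (nat \<Rightarrow> bit) \<Rightarrow> (nat \<Rightarrow> bit) \<Rightarrow> nat \<Rightarrow> bit" where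
  "out1 m n x1 x2 = (let q = max m n in
     (\<lambda>i. mat_vec q (mat_pow q (downshift q) (q - m)) x1 i
        + mat_vec q (mat_pow q (downshift q) (q - n)) x2 i))"

definition out2 :: "nat \<Rightarrow> nat \<Rightarrow> (nat \<Rightarrow> bit) \<Rightarrow> nat \<Rightarrow> bit" where
  "out2 m n x2 = (let q = max m n in mat_vec q (mat_pow q (downshift q) (q - m)) x2)"

definition num_msgs :: "nat \<Rightarrow> real \<Rightarrow> nat" where
  "num_msgs N R = nat \<lfloor>2 powr (real N * R)\<rfloor>"

text \<open>W_i uniform on {..<M_i}; U_i (local randomness) uniform on L_i random bits, i.e. on {..<2^L_i};
  all independent.  At time t (t < N):
    lnk t w2 u2   : cooperative-link symbol (C bits, i.e. < 2^C) sent from Tx2 to Tx1,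
    enc2 t w2 u2  : channel input of Tx2,
    enc1 t w1 [lnk 0 w2 u2, ..., lnk (t-1) w2 u2] u1 : channel input of Tx1 (causal).\<close>
definition zic_joint ::
  "nat \<Rightarrow> nat \<Rightarrow> nat \<Rightarrow> nat \<Rightarrow> nat \<Rightarrow> nat \<Rightarrow> nat \<Rightarrow>
   (nat \<Rightarrow> nat \<Rightarrow> nat list \<Rightarrow> nat \<Rightarrow> nat \<Rightarrow> bit) \<Rightarrow>
   (nat \<Rightarrow> nat \<Rightarrow> nat \<Rightarrow> nat \<Rightarrow> bit) \<Rightarrow>
   (nat \<Rightarrow> nat \<Rightarrow> nat \<Rightarrow> nat) \<Rightarrow>
   (nat \<times> nat \<times> (nat \<Rightarrow> bit) list \<times> (nat \<Rightarrow> bit) list) pmf" where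
  "zic_joint m n N M1 M2 L1 L2 enc1 enc2 lnk =
     do { w1 \<leftarrow> pmf_of_set {..<M1};
          w2 \<leftarrow> pmf_of_set {..<M2};
          u1 \<leftarrow> pmf_of_set {..<(2::nat) ^ L1};
          u2 \<leftarrow> pmf_of_set {..<(2::nat) ^ L2};
          let x1 = (\<lambda>t. enc1 t w1 (map (\<lambda>s. lnk s w2 u2) [0..<t]) u1);
          let x2 = (\<lambda>t. enc2 t w2 u2);
          return_pmf (w1, w2,
             map (\<lambda>t. out1 m n (x1 t) (x2 t)) [0..<N],
             map (\<lambda>t. out2 m n (x2 t)) [0..<N]) }"

definition mutual_info :: "('a \<times> 'b) pmf \<Rightarrow> real" where
  "mutual_info J = (\<Sum>ab\<in>set_pmf J.
      pmf J ab * log 2 (pmf J ab / (pmf (map_pmf fst J) (fst ab) * pmf (map_pmf snd J) (snd ab))))"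

text \<open>Achievability with perfect secrecy; the codes are a sequence indexed by block length N.\<close>
definition secrecy_achievable :: "nat \<Rightarrow> nat \<Rightarrow> nat \<Rightarrow> real \<Rightarrow> real \<Rightarrow> bool" where
  "secrecy_achievable m n C R1 R2 \<longleftrightarrow> 0 \<le> R1 \<and> 0 \<le> R2 \<and>
    (\<exists>(L1 :: nat \<Rightarrow> nat) (L2 :: nat \<Rightarrow> nat)
       (enc1 :: nat \<Rightarrow> nat \<Rightarrow> nat \<Rightarrow> nat list \<Rightarrow> nat \<Rightarrow> nat \<Rightarrow> bit)
       (enc2 :: nat \<Rightarrow> nat \<Rightarrow> nat \<Rightarrow> nat \<Rightarrow> nat \<Rightarrow> bit)
       (lnk :: nat \<Rightarrow> nat \<Rightarrow> nat \<Rightarrow> nat \<Rightarrow> nat)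
       (dec1 :: nat \<Rightarrow> (nat \<Rightarrow> bit) list \<Rightarrow> nat)
       (dec2 :: nat \<Rightarrow> (nat \<Rightarrow> bit) list \<Rightarrow> nat).
      (\<forall>N t w u. lnk N t w u < 2 ^ C) \<and>
      (\<forall>N. let J = zic_joint m n N (num_msgs N R1) (num_msgs N R2) (L1 N) (L2 N)
                       (enc1 N) (enc2 N) (lnk N)
           in mutual_info (map_pmf (\<lambda>(w1, w2, y1, y2). (w1, y2)) J) = 0 \<and>
              mutual_info (map_pmf (\<lambda>(w1, w2, y1, y2). (w2, y1)) J) = 0) \<and>
      ((\<lambda>N. measure_pmf.prob
               (zic_joint m n N (num_msgs N R1) (num_msgs N R2) (L1 N) (L2 N)
                  (enc1 N) (enc2 N) (lnk N))
               {(w1, w2, y1, y2). dec1 N y1 \<noteq> w1 \<or> dec2 N y2 \<noteq> w2}) \<longlonglongrightarrow> 0))"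

definition secrecy_capacity_region :: "nat \<Rightarrow> nat \<Rightarrow> nat \<Rightarrow> (real \<times> real) set" where
  "secrecy_capacity_region m n C = closure {(R1, R2). secrecy_achievable m n C R1 R2}"

end

theory Submission
  imports Defs
begin


lemma sum_D: "(\<Sum>l\<in>{1..q}. downshift q i l * v l) = (if 2 \<le> i \<and> i \<le> q then v (i - 1) else 0)"
proof (cases "2 \<le> i \<and> i \<le> q")
  case True
  have "(\<Sum>l\<in>{1..q}. downshift q i l * v l) = (\<Sum>l\<in>{1..q}. if l = i - 1 then v l else 0)"
    using True by (intro sum.cong) (auto simp: downshift_def)
  also have "\<dots> = v (i - 1)" unfolding sum.delta[OF finite_atLeastAtMost] using True by auto
  finally show ?thesis using True by simp
next
  case False
  then show ?thesis by (simp only: if_False) (rule sum.neutral, auto simp: downshift_def)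
qed

lemma mat_vec_pow:
  "mat_vec q (mat_pow q (downshift q) k) x i = (if k < i \<and> i \<le> q then x (i - k) else 0)"
proof (induction k arbitrary: i)
  case 0
  show ?case
  proof (cases "1 \<le> i \<and> i \<le> q")
    case True
    have "mat_vec q (mat_pow q (downshift q) 0) x i = (\<Sum>j\<in>{1..q}. if j = i then x j else 0)"
      unfolding mat_vec_def by (intro sum.cong) (auto simp: mat_id_def)
    then show ?thesis unfolding sum.delta'[OF finite_atLeastAtMost] using True by auto
  next
    case False
    then show ?thesis proof -
      have A: "mat_vec q (mat_pow q (downshift q) 0) x i = 0" unfolding mat_vec_def
        by (rule sum.neutral) (use False in \<open>auto simp: mat_id_def\<close>)
      show ?thesis using A False by auto
    qed
  qed
next
  case (Suc k)
  have "mat_vec q (mat_pow q (downshift q) (Suc k)) x i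
      = (\<Sum>j\<in>{1..q}. (\<Sum>l\<in>{1..q}. downshift q i l * mat_pow q (downshift q) k l j) * x j)"
    by (simp add: mat_vec_def mat_mult_def)
  also have "\<dots> = (\<Sum>l\<in>{1..q}. downshift q i l * (\<Sum>j\<in>{1..q}. mat_pow q (downshift q) k l j * x j))"
    unfolding sum_distrib_left sum_distrib_right mult.assoc by (rule sum.swap)
  also have "\<dots> = (\<Sum>l\<in>{1..q}. downshift q i l * mat_vec q (mat_pow q (downshift q) k) x l)"
    by (simp add: mat_vec_def)
  also have "\<dots> = (if Suc k < i \<and> i \<le> q then x (i - Suc k) else 0)"
    unfolding sum_D Suc by auto
  finally show ?case .
qed




lemma ln_less_minus_one: fixes x :: real assumes "0 < x" "x \<noteq> 1" shows "ln x < x - 1"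
proof -
  have s: "0 < sqrt x" using assms by simp
  have "ln x = 2 * ln (sqrt x)" using assms by (simp add: ln_sqrt)
  also have "\<dots> \<le> 2 * (sqrt x - 1)" using ln_le_minus_one[OF s] by simp
  also have "\<dots> < x - 1"
  proof -
    have "sqrt x \<noteq> 1" using assms by auto
    then have "0 < (sqrt x - 1)^2" by simp
    also have "(sqrt x - 1)^2 = x - 2 * sqrt x + 1" using assms by (simp add: power2_eq_square algebra_simps)
    finally show ?thesis by simp
  qed
  finally show ?thesis .
qed

lemma mi_zero_indep:
  fixes J :: "('a \<times> 'b) pmf"
  assumes fin: "finite (set_pmf J)" and mi: "mutual_info J = 0" and x: "x \<in> set_pmf J"
  shows "pmf J x = pmf (map_pmf fst J) (fst x) * pmf (map_pmf snd J) (snd x)"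
proof (rule ccontr)
  assume ne: "\<not> ?thesis"
  define S where "S = set_pmf J"
  define p where "p = pmf J"
  define q where "q = (\<lambda>y. pmf (map_pmf fst J) (fst y) * pmf (map_pmf snd J) (snd y))"
  have pp: "y \<in> S \<Longrightarrow> 0 < p y" for y by (simp add: S_def p_def pmf_positive)
  have qp: "y \<in> S \<Longrightarrow> 0 < q y" for y
  proof -
    assume "y \<in> S"
    then have "fst y \<in> set_pmf (map_pmf fst J)" "snd y \<in> set_pmf (map_pmf snd J)" by (auto simp: S_def)
    then show "0 < q y" unfolding q_def by (simp add: pmf_positive)
  qed
  have key: "y \<in> S \<Longrightarrow> p y - q y \<le> p y * ln (p y / q y)" for y
  proof -
    assume y: "y \<in> S"
    have "ln (q y / p y) \<le> q y / p y - 1" using pp[OF y] qp[OF y] by (intro ln_le_minus_one) simp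
    then have "p y * ln (q y / p y) \<le> p y * (q y / p y - 1)" using pp[OF y] by (intro mult_left_mono) auto
    moreover have "ln (p y / q y) = - ln (q y / p y)" using pp[OF y] qp[OF y] by (simp add: ln_div)
    moreover have "p y * (q y / p y - 1) = q y - p y" using pp[OF y] by (simp add: field_simps)
    ultimately show ?thesis by simp
  qed
  have xS: "x \<in> S" using x by (simp add: S_def)
  have strict: "p x - q x < p x * ln (p x / q x)"
  proof -
    have "q x / p x \<noteq> 1" using ne pp[OF xS] unfolding p_def q_def by auto
    then have "ln (q x / p x) < q x / p x - 1" using pp[OF xS] qp[OF xS] by (intro ln_less_minus_one) auto
    then have "p x * ln (q x / p x) < p x * (q x / p x - 1)" using pp[OF xS] by (intro mult_strict_left_mono) auto
    moreover have "ln (p x / q x) = - ln (q x / p x)" using pp[OF xS] qp[OF xS] by (simp add: ln_div)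
    moreover have "p x * (q x / p x - 1) = q x - p x" using pp[OF xS] by (simp add: field_simps)
    ultimately show ?thesis by simp
  qed
  have sump: "(\<Sum>y\<in>S. p y) = 1" unfolding p_def S_def by (rule sum_pmf_eq_1) (use fin in auto)
  have sumq: "(\<Sum>y\<in>S. q y) \<le> 1"
  proof -
    have "(\<Sum>y\<in>S. q y) \<le> (\<Sum>y\<in>fst ` S \<times> snd ` S. q y)"
      by (rule sum_mono2) (use fin in \<open>auto simp: S_def q_def intro: rev_image_eqI\<close>)
    also have "\<dots> = (\<Sum>a\<in>fst ` S. pmf (map_pmf fst J) a) * (\<Sum>b\<in>snd ` S. pmf (map_pmf snd J) b)"
      unfolding q_def by (simp add: sum_product sum.cartesian_product case_prod_beta)
    also have "\<dots> \<le> 1 * 1"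
    proof (rule mult_mono)
      show "(\<Sum>a\<in>fst ` S. pmf (map_pmf fst J) a) \<le> 1"
        using measure_measure_pmf_finite[of "fst ` S" "map_pmf fst J"] fin
          measure_pmf.prob_le_1[of "map_pmf fst J" "fst ` S"]
        by (simp add: S_def del: measure_map_pmf)
      show "(\<Sum>b\<in>snd ` S. pmf (map_pmf snd J) b) \<le> 1"
        using measure_measure_pmf_finite[of "snd ` S" "map_pmf snd J"] fin
          measure_pmf.prob_le_1[of "map_pmf snd J" "snd ` S"]
        by (simp add: S_def del: measure_map_pmf)
    qed (auto intro: sum_nonneg)
    finally show ?thesis by simp
  qed
  have "0 \<le> (\<Sum>y\<in>S. p y - q y)" using sump sumq by (simp add: sum_subtractf)
  also have "\<dots> < (\<Sum>y\<in>S. p y * ln (p y / q y))"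
    by (rule sum_strict_mono_ex1) (use fin key strict xS in \<open>auto simp: S_def\<close>)
  finally have pos: "0 < (\<Sum>y\<in>S. p y * ln (p y / q y))" .
  have "mutual_info J = (\<Sum>y\<in>S. p y * ln (p y / q y)) / ln 2"
    unfolding mutual_info_def S_def p_def q_def log_def by (simp add: sum_divide_distrib)
  with pos mi show False by simp
qed

lemma pmf_of_set_Times:
  assumes "finite A" "A \<noteq> {}" "finite B" "B \<noteq> {}"
  shows "pmf_of_set (A \<times> B) = pair_pmf (pmf_of_set A) (pmf_of_set B)"
  apply (rule pmf_eqI)
  subgoal for x by (cases x) (use assms in \<open>simp add: pmf_pair card_cartesian_product indicator_def\<close>)
  done

lemma zic_joint_map:
  assumes "M1 > 0" "M2 > 0"
  shows "zic_joint m n N M1 M2 L1 L2 enc1 enc2 lnk =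
    map_pmf (\<lambda>(w1, w2, u1, u2). (w1, w2,
             map (\<lambda>t. out1 m n (enc1 t w1 (map (\<lambda>s. lnk s w2 u2) [0..<t]) u1) (enc2 t w2 u2)) [0..<N],
             map (\<lambda>t. out2 m n (enc2 t w2 u2)) [0..<N]))
      (pmf_of_set ({..<M1} \<times> {..<M2} \<times> {..<(2::nat)^L1} \<times> {..<(2::nat)^L2}))"
  using assms
  by (simp add: zic_joint_def pmf_of_set_Times[of "{..<M1}"] pmf_of_set_Times[of "{..<M2}"]
      pmf_of_set_Times[of "{..<(2::nat)^L1}"] lessThan_empty_iff pair_pmf_def map_bind_pmf bind_assoc_pmf
      bind_return_pmf Let_def)




definition hproj :: "nat \<Rightarrow> nat \<Rightarrow> (nat \<Rightarrow> bit) \<Rightarrow> nat \<Rightarrow> bit" where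
  "hproj m n y = (\<lambda>i. if n - m < i \<and> i \<le> n then y (i - (n - m)) else 0)"

lemma out1_eq: assumes "m \<le> n"
  shows "out1 m n x1 x2 = (\<lambda>i. (if n - m < i \<and> i \<le> n then x1 (i - (n - m)) else 0)
             + (if 0 < i \<and> i \<le> n then x2 i else 0))"
proof -
  have q: "max m n = n" using assms by simp
  show ?thesis unfolding out1_def Let_def q mat_vec_pow by (simp only: diff_self_eq_0 diff_zero)
qed

lemma out2_eq: assumes "m \<le> n"
  shows "out2 m n x2 = (\<lambda>i. if n - m < i \<and> i \<le> n then x2 (i - (n - m)) else 0)"
proof -
  have q: "max m n = n" using assms by simp
  show ?thesis unfolding out2_def Let_def q mat_vec_pow by (rule refl)
qed

lemma hproj_out1: assumes "2 * m \<le> n"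
  shows "hproj m n (out1 m n x1 x2) = out2 m n x2"
proof -
  have "m \<le> n" using assms by simp
  show ?thesis
    unfolding hproj_def out1_eq[OF \<open>m \<le> n\<close>] out2_eq[OF \<open>m \<le> n\<close>]
  proof (rule ext)
    fix i
    show "(if n - m < i \<and> i \<le> n
          then (if n - m < i - (n - m) \<and> i - (n - m) \<le> n then x1 (i - (n - m) - (n - m)) else 0) +
               (if 0 < i - (n - m) \<and> i - (n - m) \<le> n then x2 (i - (n - m)) else 0)
          else 0) =
         (if n - m < i \<and> i \<le> n then x2 (i - (n - m)) else 0)"
    proof (cases "n - m < i \<and> i \<le> n")
      case True
      then have a: "(n - m < i - (n - m) \<and> i - (n - m) \<le> n) = False" and b: "(0 < i - (n - m) \<and> i - (n - m) \<le> n) = True"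
        and c: "(n - m < i \<and> i \<le> n) = True"
        using assms by auto
      show ?thesis by (simp only: a b c if_True if_False add_0_left)
    next
      case False
      show ?thesis by (simp only: False if_False)
    qed
  qed
qed

lemma out1_dep: assumes "m \<le> n" "map x1 [1..<m+1] = map x1' [1..<m+1]"
  shows "out1 m n x1 x2 = out1 m n x1' x2"
proof -
  have A: "\<forall>x\<in>set [1..<m+1]. x1 x = x1' x" using assms(2) by (simp only: map_eq_conv)
  have "\<And>j. 1 \<le> j \<Longrightarrow> j \<le> m \<Longrightarrow> x1 j = x1' j"
  proof -
    fix j assume "1 \<le> j" "j \<le> m"
    then have "j \<in> set [1..<m+1]" by auto
    then show "x1 j = x1' j" using A by blast
  qed
  then have "\<And>i. (if n - m < i \<and> i \<le> n then x1 (i - (n - m)) else 0) = (if n - m < i \<and> i \<le> n then x1' (i - (n - m)) else 0)"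
  proof -
    fix i
    show "(if n - m < i \<and> i \<le> n then x1 (i - (n - m)) else 0) = (if n - m < i \<and> i \<le> n then x1' (i - (n - m)) else 0)"
    proof (cases "n - m < i \<and> i \<le> n")
      case True
      then have "1 \<le> i - (n - m)" "i - (n - m) \<le> m" using assms(1) by auto
      then have "x1 (i - (n - m)) = x1' (i - (n - m))" using \<open>\<And>j. 1 \<le> j \<Longrightarrow> j \<le> m \<Longrightarrow> x1 j = x1' j\<close> by blast
      then show ?thesis by (simp only: if_cancel)
    next
      case False
      then show ?thesis by (simp only: if_False)
    qed
  qed
  then show ?thesis unfolding out1_eq[OF assms(1)] by (simp only:)
qed




lemma mi_const_snd:
  fixes K :: "('a \<times> 'b) pmf"
  assumes c: "\<forall>ab\<in>set_pmf K. snd ab = c" shows "mutual_info K = 0"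
proof -
  have ms: "map_pmf snd K = return_pmf c"
    using map_pmf_cong[of K K snd "\<lambda>_. c"] c by (simp add: map_pmf_const)
  have K: "K = map_pmf (\<lambda>a. (a, c)) (map_pmf fst K)"
    unfolding map_pmf_comp
    by (rule map_pmf_idI[symmetric]) (use c in auto)
  have inj: "inj (\<lambda>a. (a, c))" by (auto intro: injI)
  have "\<And>ab. ab \<in> set_pmf K \<Longrightarrow> pmf K ab = pmf (map_pmf fst K) (fst ab)"
  proof -
    fix ab assume ab: "ab \<in> set_pmf K"
    have "pmf K ab = pmf (map_pmf (\<lambda>a. (a, c)) (map_pmf fst K)) ((\<lambda>a. (a, c)) (fst ab))"
      using ab c by (subst K[symmetric]) (metis prod.collapse)
    also have "\<dots> = pmf (map_pmf fst K) (fst ab)" by (rule pmf_map_inj'[OF inj])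
    finally show "pmf K ab = pmf (map_pmf fst K) (fst ab)" .
  qed
  then show ?thesis unfolding mutual_info_def ms
    by (intro sum.neutral) (use c in auto)
qed

lemma mi_const_fst:
  fixes K :: "('a \<times> 'b) pmf"
  assumes c: "\<forall>ab\<in>set_pmf K. fst ab = c" shows "mutual_info K = 0"
proof -
  have ms: "map_pmf fst K = return_pmf c"
    using map_pmf_cong[of K K fst "\<lambda>_. c"] c by (simp add: map_pmf_const)
  have K: "K = map_pmf (\<lambda>a. (c, a)) (map_pmf snd K)"
    unfolding map_pmf_comp
    by (rule map_pmf_idI[symmetric]) (use c in auto)
  have inj: "inj (\<lambda>a. (c, a))" by (auto intro: injI)
  have "\<And>ab. ab \<in> set_pmf K \<Longrightarrow> pmf K ab = pmf (map_pmf snd K) (snd ab)"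
  proof -
    fix ab assume ab: "ab \<in> set_pmf K"
    have "pmf K ab = pmf (map_pmf (\<lambda>a. (c, a)) (map_pmf snd K)) ((\<lambda>a. (c, a)) (snd ab))"
      using ab c by (subst K[symmetric]) (metis prod.collapse)
    also have "\<dots> = pmf (map_pmf snd K) (snd ab)" by (rule pmf_map_inj'[OF inj])
    finally show "pmf K ab = pmf (map_pmf snd K) (snd ab)" .
  qed
  then show ?thesis unfolding mutual_info_def ms
    by (intro sum.neutral) (use c in auto)
qed

lemma num_msgs_pos: assumes "0 \<le> R" shows "1 \<le> num_msgs N R"
proof -
  have "1 \<le> 2 powr (real N * R)" using assms by (intro ge_one_powr_ge_zero) auto
  then have "1 \<le> \<lfloor>2 powr (real N * R)\<rfloor>" by linarith
  then show ?thesis unfolding num_msgs_def by linarith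
qed

lemma num_msgs_zero: "num_msgs N 0 = 1"
  unfolding num_msgs_def by simp

lemma num_msgs_le: assumes "R \<le> real m" "0 \<le> R" shows "num_msgs N R \<le> 2 ^ (N * m)"
proof -
  have "2 powr (real N * R) \<le> 2 powr (real N * real m)"
    using assms by (intro powr_mono) (auto intro: mult_left_mono)
  also have "\<dots> = real (2 ^ (N * m))" by (simp add: powr_realpow[symmetric] of_nat_mult)
  finally have "\<lfloor>2 powr (real N * R)\<rfloor> \<le> int (2 ^ (N * m))"
    by (metis floor_mono floor_of_nat of_int_of_nat_eq)
  then show ?thesis unfolding num_msgs_def by linarith
qed

lemma num_msgs_ge: "real (num_msgs N R) \<ge> 2 powr (real N * R) - 1"
proof -
  have "real_of_int \<lfloor>2 powr (real N * R)\<rfloor> > 2 powr (real N * R) - 1" by linarith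
  moreover have "\<lfloor>2 powr (real N * R)\<rfloor> \<ge> 0" by simp
  ultimately show ?thesis unfolding num_msgs_def by simp
qed




definition e1 :: "nat \<Rightarrow> nat \<Rightarrow> nat \<Rightarrow> nat \<Rightarrow> bit" where
  "e1 m t w = (\<lambda>j. if 1 \<le> j \<and> j \<le> m \<and> bit w (t * m + (j - 1)) then 1 else 0)"

definition Yc :: "nat \<Rightarrow> nat \<Rightarrow> nat \<Rightarrow> nat \<Rightarrow> (nat \<Rightarrow> bit) list" where
  "Yc m n N w = map (\<lambda>t. out1 m n (e1 m t w) (\<lambda>j. 0)) [0..<N]"

lemma Yc_inj:
  assumes mn: "m \<le> n" and m: "1 \<le> m" and w: "w < 2 ^ (N * m)" and w': "w' < 2 ^ (N * m)"
    and eq: "Yc m n N w = Yc m n N w'"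
  shows "w = w'"
proof -
  have e: "e1 m t w j = e1 m t w' j" if t: "t < N" and j: "1 \<le> j" "j \<le> m" for t j
  proof -
    have "out1 m n (e1 m t w) (\<lambda>j. 0) = out1 m n (e1 m t w') (\<lambda>j. 0)"
      using eq t unfolding Yc_def by (metis (no_types, lifting) add_0 diff_zero length_map length_upt nth_map nth_upt)
    then have "out1 m n (e1 m t w) (\<lambda>j. 0) (n - m + j) = out1 m n (e1 m t w') (\<lambda>j. 0) (n - m + j)"
      by simp
    moreover have "n - m < n - m + j \<and> n - m + j \<le> n" "n - m + j - (n - m) = j" using j mn by auto
    ultimately have "of_bool (e1 m t w j = 1) = (of_bool (e1 m t w' j = 1) :: bit)" unfolding out1_eq[OF mn] by simp
    then show ?thesis by (cases "e1 m t w j"; cases "e1 m t w' j") auto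
  qed
  have b: "bit w k = bit w' k" for k
  proof (cases "k < N * m")
    case True
    define t where "t = k div m"
    define j where "j = k mod m + 1"
    have tN: "t < N" unfolding t_def using True m by (simp add: div_less_iff_less_mult mult.commute)
    have j1: "1 \<le> j" "j \<le> m" unfolding j_def using m by (auto simp: Suc_le_eq)
    have k: "t * m + (j - 1) = k" unfolding t_def j_def by simp
    from e[OF tN j1] show ?thesis unfolding e1_def k using j1 by (auto split: if_splits)
  next
    case False
    have "(2::nat) ^ (N * m) \<le> 2 ^ k" using False by (intro power_increasing) auto
    then have "w < 2 ^ k" "w' < 2 ^ k" using w w' by linarith+
    then have "w div 2 ^ k = 0" "w' div 2 ^ k = 0" by (auto intro!: div_less)
    then show ?thesis by (simp add: bit_iff_odd)
  qed
  then show ?thesis by (simp add: bit_eq_iff)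
qed

lemma achievable:
  assumes m: "1 \<le> m" and mn: "2 * m \<le> n" and R1: "0 \<le> R1" "R1 \<le> real m"
  shows "secrecy_achievable m n C R1 0"
proof -
  have mn': "m \<le> n" using mn by simp
  define enc1 :: "nat \<Rightarrow> nat \<Rightarrow> nat \<Rightarrow> nat list \<Rightarrow> nat \<Rightarrow> nat \<Rightarrow> bit" where
    "enc1 = (\<lambda>N t w ls u. e1 m t w)"
  define enc2 :: "nat \<Rightarrow> nat \<Rightarrow> nat \<Rightarrow> nat \<Rightarrow> nat \<Rightarrow> bit" where
    "enc2 = (\<lambda>N t w u j. 0)"
  define lnk :: "nat \<Rightarrow> nat \<Rightarrow> nat \<Rightarrow> nat \<Rightarrow> nat" where "lnk = (\<lambda>N t w u. 0)"
  define dec1 :: "nat \<Rightarrow> (nat \<Rightarrow> bit) list \<Rightarrow> nat" where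
    "dec1 = (\<lambda>N ys. SOME w. w < 2 ^ (N * m) \<and> Yc m n N w = ys)"
  define dec2 :: "nat \<Rightarrow> (nat \<Rightarrow> bit) list \<Rightarrow> nat" where "dec2 = (\<lambda>N ys. 0)"
  define L :: "nat \<Rightarrow> nat" where "L = (\<lambda>N. 0)"
  define J where "J = (\<lambda>N. zic_joint m n N (num_msgs N R1) (num_msgs N 0) (L N) (L N)
                       (enc1 N) (enc2 N) (lnk N))"
  have dec1: "dec1 N (Yc m n N w) = w" if "w < 2 ^ (N * m)" for N w
    unfolding dec1_def
    by (rule someI2[of _ w]) (use that Yc_inj[OF mn' m] in auto)
  have setJ: "set_pmf (J N) = (\<lambda>w1. (w1, 0, Yc m n N w1, map (\<lambda>t. out2 m n (\<lambda>j. 0)) [0..<N])) ` {..<num_msgs N R1}" for N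
  proof -
    have M1: "num_msgs N R1 > 0" using num_msgs_pos[OF R1(1), of N] by linarith
    show ?thesis unfolding J_def
      by (subst zic_joint_map) (use M1 in \<open>auto simp: num_msgs_zero L_def enc1_def enc2_def Yc_def lessThan_empty_iff lessThan_Suc image_iff\<close>)
  qed
  have sec: "mutual_info (map_pmf (\<lambda>(w1, w2, y1, y2). (w1, y2)) (J N)) = 0 \<and>
             mutual_info (map_pmf (\<lambda>(w1, w2, y1, y2). (w2, y1)) (J N)) = 0" for N
    by (intro conjI mi_const_snd mi_const_fst) (auto simp: setJ)
  have err: "measure_pmf.prob (J N) {(w1, w2, y1, y2). dec1 N y1 \<noteq> w1 \<or> dec2 N y2 \<noteq> w2} = 0" for N
  proof -
    have "w1 < num_msgs N R1 \<Longrightarrow> dec1 N (Yc m n N w1) = w1" for w1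
      using num_msgs_le[OF R1(2,1), of N] by (intro dec1) linarith
    then show ?thesis unfolding measure_pmf_zero_iff setJ by (auto simp: dec2_def)
  qed
  show ?thesis unfolding secrecy_achievable_def
    apply (intro conjI R1(1) order_refl)
    apply (rule exI[of _ L], rule exI[of _ L], rule exI[of _ enc1], rule exI[of _ enc2], rule exI[of _ lnk],
           rule exI[of _ dec1], rule exI[of _ dec2])
    using sec err unfolding J_def by (simp add: lnk_def)
qed




lemma conv2:
  fixes enc1 :: "nat \<Rightarrow> nat \<Rightarrow> nat list \<Rightarrow> nat \<Rightarrow> nat \<Rightarrow> bit"
    and enc2 :: "nat \<Rightarrow> nat \<Rightarrow> nat \<Rightarrow> nat \<Rightarrow> bit" and lnk :: "nat \<Rightarrow> nat \<Rightarrow> nat \<Rightarrow> nat"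
    and dec1 dec2 :: "(nat \<Rightarrow> bit) list \<Rightarrow> nat"
  assumes mn: "2 * m \<le> n" and M1: "0 < M1" and M2: "0 < M2"
    and mi: "mutual_info (map_pmf (\<lambda>(w1, w2, y1, y2). (w2, y1)) (zic_joint m n N M1 M2 L1 L2 enc1 enc2 lnk)) = 0"
  shows "1 - 1 / real M2 \<le> measure_pmf.prob (zic_joint m n N M1 M2 L1 L2 enc1 enc2 lnk)
                {(w1, w2, y1, y2). dec1 y1 \<noteq> w1 \<or> dec2 y2 \<noteq> w2}"
proof -
  define S0 where "S0 = {..<M1} \<times> {..<M2} \<times> {..<(2::nat)^L1} \<times> {..<(2::nat)^L2}"
  define F0 where "F0 = (\<lambda>(w1, w2, u1, u2). (w1, w2,
             map (\<lambda>t. out1 m n (enc1 t w1 (map (\<lambda>s. lnk s w2 u2) [0..<t]) u1) (enc2 t w2 u2)) [0..<N],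
             map (\<lambda>t. out2 m n (enc2 t w2 u2)) [0..<N]))"
  define J where "J = zic_joint m n N M1 M2 L1 L2 enc1 enc2 lnk"
  define G :: "nat \<times> nat \<times> (nat \<Rightarrow> bit) list \<times> (nat \<Rightarrow> bit) list \<Rightarrow> nat \<times> (nat \<Rightarrow> bit) list"
    where "G = (\<lambda>(w1, w2, y1, y2). (w2, y1))"
  define K where "K = map_pmf G J"
  have J: "J = map_pmf F0 (pmf_of_set S0)"
    unfolding J_def F0_def S0_def by (rule zic_joint_map[OF M1 M2])
  have finS0: "finite S0" and neS0: "S0 \<noteq> {}" using M1 M2 by (auto simp: S0_def lessThan_empty_iff)
  have setJ: "set_pmf J = F0 ` S0" using finS0 neS0 by (simp add: J)
  have finJ: "finite (set_pmf J)" using finS0 by (simp add: setJ)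
  have finK: "finite (set_pmf K)" using finJ by (simp add: K_def)
  have miK: "mutual_info K = 0" using mi unfolding K_def G_def J_def .
  have y2: "y2 = map (hproj m n) y1" if "(w1, w2, y1, y2) \<in> set_pmf J" for w1 w2 y1 y2
  proof -
    from that obtain a b c d where "(w1, w2, y1, y2) = F0 (a, b, c, d)"
      unfolding setJ by (metis (no_types, lifting) image_iff prod_cases4)
    then show ?thesis by (simp add: F0_def hproj_out1[OF mn] o_def)
  qed
  define E where "E = {(w1, w2, y1, y2). dec1 y1 \<noteq> w1 \<or> dec2 y2 \<noteq> w2}"
  define E2c where "E2c = {(w1::nat, w2::nat, y1::(nat \<Rightarrow> bit) list, y2::(nat \<Rightarrow> bit) list). dec2 y2 = w2}"
  define E3 where "E3 = {(w1::nat, w2::nat, y1::(nat \<Rightarrow> bit) list, y2::(nat \<Rightarrow> bit) list). dec2 (map (hproj m n) y1) = w2}"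
  define F where "F = {(w, y). dec2 (map (hproj m n) y) = w}"
  have "measure_pmf.prob J (UNIV - E2c) \<le> measure_pmf.prob J E"
    by (rule measure_pmf.finite_measure_mono) (auto simp: E_def E2c_def)
  moreover have "measure_pmf.prob J (UNIV - E2c) = 1 - measure_pmf.prob J E2c"
    using measure_pmf.prob_compl[of E2c J] by simp
  moreover have "measure_pmf.prob J E2c = measure_pmf.prob J E3"
  proof -
    have "E2c \<inter> set_pmf J = E3 \<inter> set_pmf J"
      using y2 by (auto simp: E2c_def E3_def)
    then show ?thesis by (metis measure_Int_set_pmf)
  qed
  moreover have "measure_pmf.prob J E3 = measure_pmf.prob K F"
  proof -
    have "G -` F = E3" by (auto simp: G_def F_def E3_def)
    then show ?thesis by (simp add: K_def)
  qed
  moreover have "measure_pmf.prob K F \<le> 1 / real M2"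
  proof -
    have mfK: "map_pmf fst K = pmf_of_set {..<M2}"
    proof -
      have "pmf_of_set S0 = pair_pmf (pmf_of_set {..<M1}) (pair_pmf (pmf_of_set {..<M2}) (pmf_of_set ({..<(2::nat)^L1} \<times> {..<(2::nat)^L2})))"
        unfolding S0_def using M1 M2
        by (simp add: pmf_of_set_Times lessThan_empty_iff)
      moreover have "fst \<circ> G \<circ> F0 = fst \<circ> snd" by (auto simp: G_def F0_def)
      ultimately have "map_pmf fst K = map_pmf (fst \<circ> snd) (pair_pmf (pmf_of_set {..<M1}) (pair_pmf (pmf_of_set {..<M2}) (pmf_of_set ({..<(2::nat)^L1} \<times> {..<(2::nat)^L2}))))"
        unfolding K_def J map_pmf_comp by (simp add: comp_assoc o_def)
      also have "\<dots> = map_pmf fst (map_pmf snd (pair_pmf (pmf_of_set {..<M1}) (pair_pmf (pmf_of_set {..<M2}) (pmf_of_set ({..<(2::nat)^L1} \<times> {..<(2::nat)^L2})))))"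
        by (simp add: map_pmf_comp o_def)
      also have "\<dots> = pmf_of_set {..<M2}" by (simp only: map_snd_pair_pmf map_fst_pair_pmf)
      finally show ?thesis .
    qed
    have pA: "pmf (map_pmf fst K) w \<le> 1 / real M2" for w
      unfolding mfK using M2 by (subst pmf_of_set) (auto simp: indicator_def)
    have "measure_pmf.prob K F = measure_pmf.prob K (F \<inter> set_pmf K)"
      by (simp add: measure_Int_set_pmf)
    also have "\<dots> = (\<Sum>x\<in>F \<inter> set_pmf K. pmf K x)"
      using finK by (simp add: measure_measure_pmf_finite)
    also have "\<dots> = (\<Sum>x\<in>F \<inter> set_pmf K. pmf (map_pmf fst K) (fst x) * pmf (map_pmf snd K) (snd x))"
    proof (rule sum.cong)
      fix x assume "x \<in> F \<inter> set_pmf K"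
      then show "pmf K x = pmf (map_pmf fst K) (fst x) * pmf (map_pmf snd K) (snd x)"
        using mi_zero_indep[OF finK miK, of x] by blast
    qed simp
    also have "\<dots> \<le> (\<Sum>x\<in>F \<inter> set_pmf K. 1 / real M2 * pmf (map_pmf snd K) (snd x))"
      by (intro sum_mono mult_right_mono pA) simp
    also have "\<dots> = 1 / real M2 * (\<Sum>y\<in>snd ` (F \<inter> set_pmf K). pmf (map_pmf snd K) y)"
    proof -
      have "inj_on snd (F \<inter> set_pmf K)" by (auto simp: F_def inj_on_def)
      then show ?thesis by (simp add: sum_distrib_left sum.reindex)
    qed
    also have "\<dots> \<le> 1 / real M2 * 1"
    proof (rule mult_left_mono)
      have "(\<Sum>y\<in>snd ` (F \<inter> set_pmf K). pmf (map_pmf snd K) y) = measure_pmf.prob (map_pmf snd K) (snd ` (F \<inter> set_pmf K))"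
        using finK by (simp add: measure_measure_pmf_finite del: measure_map_pmf)
      also have "\<dots> \<le> 1" by (rule measure_pmf.prob_le_1)
      finally show "(\<Sum>y\<in>snd ` (F \<inter> set_pmf K). pmf (map_pmf snd K) y) \<le> 1" .
    qed simp
    finally show ?thesis by simp
  qed
  ultimately show ?thesis unfolding J_def E_def by linarith
qed




lemma fin_bit: "finite (UNIV :: bit set)"
proof -
  have U: "(UNIV :: bit set) = {0, 1}" by (auto intro: bit.exhaust)
  show ?thesis unfolding U by simp
qed

lemma fin_bit_lists: "finite {xs :: bit list. set xs \<subseteq> UNIV \<and> length xs = m}"
  by (rule finite_lists_length_eq[OF fin_bit])

lemma card_bit_lists: "card {xs :: bit list. set xs \<subseteq> UNIV \<and> length xs = m} = 2 ^ m"
proof -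
  have U: "(UNIV :: bit set) = {0, 1}" by (auto intro: bit.exhaust)
  have "card (UNIV :: bit set) = 2" unfolding U by simp
  moreover have "finite (UNIV :: bit set)" unfolding U by simp
  ultimately show ?thesis using card_lists_length_eq[of "UNIV :: bit set" m] by simp
qed

lemma conv1:
  fixes enc1 :: "nat \<Rightarrow> nat \<Rightarrow> nat list \<Rightarrow> nat \<Rightarrow> nat \<Rightarrow> bit"
    and enc2 :: "nat \<Rightarrow> nat \<Rightarrow> nat \<Rightarrow> nat \<Rightarrow> bit" and lnk :: "nat \<Rightarrow> nat \<Rightarrow> nat \<Rightarrow> nat"
    and dec1 dec2 :: "(nat \<Rightarrow> bit) list \<Rightarrow> nat"
  assumes mn: "m \<le> n" and M1: "0 < M1" and M2: "0 < M2"
  shows "1 - 2 ^ (N * m) / real M1 \<le> measure_pmf.prob (zic_joint m n N M1 M2 L1 L2 enc1 enc2 lnk)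
                {(w1, w2, y1, y2). dec1 y1 \<noteq> w1 \<or> dec2 y2 \<noteq> w2}"
proof -
  define R0 where "R0 = {..<M2} \<times> {..<(2::nat)^L1} \<times> {..<(2::nat)^L2}"
  define S0 where "S0 = {..<M1} \<times> R0"
  define Y1 where "Y1 = (\<lambda>w1 (w2, u1, u2).
             map (\<lambda>t. out1 m n (enc1 t w1 (map (\<lambda>s. lnk s w2 u2) [0..<t]) u1) (enc2 t w2 u2)) [0..<N])"
  define Z where "Z = (\<lambda>w1 (w2, u1, u2).
             map (\<lambda>t. map (enc1 t w1 (map (\<lambda>s. lnk s w2 u2) [0..<t]) u1) [1..<m+1]) [0..<N])"
  define F0 where "F0 = (\<lambda>(w1, w2, u1, u2). (w1, w2,
             map (\<lambda>t. out1 m n (enc1 t w1 (map (\<lambda>s. lnk s w2 u2) [0..<t]) u1) (enc2 t w2 u2)) [0..<N],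
             map (\<lambda>t. out2 m n (enc2 t w2 u2)) [0..<N]))"
  define J where "J = zic_joint m n N M1 M2 L1 L2 enc1 enc2 lnk"
  have J: "J = map_pmf F0 (pmf_of_set S0)"
    unfolding J_def F0_def S0_def R0_def by (rule zic_joint_map[OF M1 M2])
  have finR0: "finite R0" and neR0: "R0 \<noteq> {}" using M2 by (auto simp: R0_def lessThan_empty_iff)
  have finS0: "finite S0" and neS0: "S0 \<noteq> {}" using M1 finR0 neR0 by (auto simp: S0_def lessThan_empty_iff)
  define E where "E = {(w1, w2, y1, y2). dec1 y1 \<noteq> w1 \<or> dec2 y2 \<noteq> w2}"
  define E1c where "E1c = {(w1::nat, w2::nat, y1::(nat \<Rightarrow> bit) list, y2::(nat \<Rightarrow> bit) list). dec1 y1 = w1}"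
  define T where "T = {(w1, r). w1 < M1 \<and> r \<in> R0 \<and> dec1 (Y1 w1 r) = w1}"
  have "measure_pmf.prob J (UNIV - E1c) \<le> measure_pmf.prob J E"
    by (rule measure_pmf.finite_measure_mono) (auto simp: E_def E1c_def)
  moreover have "measure_pmf.prob J (UNIV - E1c) = 1 - measure_pmf.prob J E1c"
    using measure_pmf.prob_compl[of E1c J] by simp
  moreover have "measure_pmf.prob J E1c = real (card T) / real (card S0)"
  proof -
    have "S0 \<inter> F0 -` E1c = T"
      by (auto simp: S0_def T_def F0_def E1c_def Y1_def)
    then show ?thesis unfolding J using finS0 neS0 by (simp add: measure_pmf_of_set)
  qed
  moreover have "card T \<le> card R0 * 2 ^ (N * m)"
  proof -
    define LL where "LL = {xss :: bit list list. set xss \<subseteq> {xs. set xs \<subseteq> UNIV \<and> length xs = m} \<and> length xss = N}"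
    define \<phi> where "\<phi> = (\<lambda>(w1, r). (r, Z w1 r))"
    have cLL: "card LL = 2 ^ (N * m)"
      unfolding LL_def card_lists_length_eq[OF fin_bit_lists] card_bit_lists
      by (metis power_mult mult.commute)
    have "inj_on \<phi> T"
    proof (rule inj_onI)
      fix a b assume a: "a \<in> T" and b: "b \<in> T" and e: "\<phi> a = \<phi> b"
      obtain w1 r where ar: "a = (w1, r)" by (cases a)
      obtain w1' r' where br: "b = (w1', r')" by (cases b)
      have rr: "r' = r" and zz: "Z w1 r = Z w1' r" using e by (auto simp: \<phi>_def ar br)
      have "Y1 w1 r = Y1 w1' r"
      proof -
        obtain w2 u1 u2 where r: "r = (w2, u1, u2)" by (cases r)
        show ?thesis unfolding r Y1_def
        proof (simp only: prod.case map_eq_conv, intro ballI)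
          fix t assume "t \<in> set [0..<N]"
          then have t: "t < N" by simp
          have "map (enc1 t w1 (map (\<lambda>s. lnk s w2 u2) [0..<t]) u1) [1..<m+1]
              = map (enc1 t w1' (map (\<lambda>s. lnk s w2 u2) [0..<t]) u1) [1..<m+1]"
            using arg_cong[OF zz, of "\<lambda>xs. xs ! t"] t by (simp add: Z_def r)
          then show "out1 m n (enc1 t w1 (map (\<lambda>s. lnk s w2 u2) [0..<t]) u1) (enc2 t w2 u2)
                   = out1 m n (enc1 t w1' (map (\<lambda>s. lnk s w2 u2) [0..<t]) u1) (enc2 t w2 u2)"
            by (rule out1_dep[OF mn])
        qed
      qed
      then show "a = b" using a b by (simp add: ar br rr T_def)
    qed
    moreover have "\<phi> ` T \<subseteq> R0 \<times> LL"
      by (auto simp: \<phi>_def T_def LL_def Z_def)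
    moreover have "finite (R0 \<times> LL)"
      unfolding LL_def using finR0 finite_lists_length_eq[OF fin_bit_lists] by blast
    ultimately have "card T \<le> card (R0 \<times> LL)" by (metis card_inj_on_le)
    then show ?thesis by (simp add: card_cartesian_product cLL)
  qed
  moreover have "card S0 = M1 * card R0" by (simp add: S0_def card_cartesian_product)
  ultimately have "1 - real (card R0 * 2 ^ (N * m)) / real (M1 * card R0) \<le> measure_pmf.prob J E"
  proof -
    assume a1: "measure_pmf.prob J (UNIV - E1c) \<le> measure_pmf.prob J E"
      and a2: "measure_pmf.prob J (UNIV - E1c) = 1 - measure_pmf.prob J E1c"
      and a3: "measure_pmf.prob J E1c = real (card T) / real (card S0)"
      and a4: "card T \<le> card R0 * 2 ^ (N * m)" and a5: "card S0 = M1 * card R0"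
    have "real (card T) / real (card S0) \<le> real (card R0 * 2 ^ (N * m)) / real (M1 * card R0)"
    proof -
      have "real (card T) \<le> real (card R0 * 2 ^ (N * m))" using a4 by (simp only: of_nat_le_iff)
      then show ?thesis unfolding a5 by (intro divide_right_mono) auto
    qed
    then show ?thesis using a1 a2 a3 by linarith
  qed
  moreover have "real (card R0 * 2 ^ (N * m)) / real (M1 * card R0) = 2 ^ (N * m) / real M1"
    using finR0 neR0 by (simp add: card_gt_0_iff)
  ultimately show ?thesis unfolding J_def E_def by simp
qed




lemma achievable_iff:
  assumes m: "1 \<le> m" and mn: "2 * m \<le> n"
  shows "secrecy_achievable m n C R1 R2 \<longleftrightarrow> (0 \<le> R1 \<and> R1 \<le> real m \<and> R2 = 0)"
proof
  assume "0 \<le> R1 \<and> R1 \<le> real m \<and> R2 = 0"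
  then show "secrecy_achievable m n C R1 R2" using achievable[OF m mn] by auto
next
  assume "secrecy_achievable m n C R1 R2"
  then obtain L1 L2 enc1 enc2 lnk dec1 dec2 where
    R: "0 \<le> R1" "0 \<le> R2" and
    sec: "\<forall>N. let J = zic_joint m n N (num_msgs N R1) (num_msgs N R2) (L1 N) (L2 N)
                       (enc1 N) (enc2 N) (lnk N)
           in mutual_info (map_pmf (\<lambda>(w1, w2, y1, y2). (w1, y2)) J) = 0 \<and>
              mutual_info (map_pmf (\<lambda>(w1, w2, y1, y2). (w2, y1)) J) = 0" and
    lim: "(\<lambda>N. measure_pmf.prob
               (zic_joint m n N (num_msgs N R1) (num_msgs N R2) (L1 N) (L2 N)
                  (enc1 N) (enc2 N) (lnk N))
               {(w1, w2, y1, y2). dec1 N y1 \<noteq> w1 \<or> dec2 N y2 \<noteq> w2}) \<longlonglongrightarrow> 0"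
    unfolding secrecy_achievable_def by blast
  define P where "P = (\<lambda>N. measure_pmf.prob
               (zic_joint m n N (num_msgs N R1) (num_msgs N R2) (L1 N) (L2 N)
                  (enc1 N) (enc2 N) (lnk N))
               {(w1, w2, y1, y2). dec1 N y1 \<noteq> w1 \<or> dec2 N y2 \<noteq> w2})"
  have "eventually (\<lambda>N. P N < 1/2) sequentially"
    using order_tendstoD(2)[OF lim[folded P_def], of "1/2"] by simp
  then obtain N0 where N0: "\<And>N. N \<ge> N0 \<Longrightarrow> P N < 1/2" by (auto simp: eventually_sequentially)
  have M1pos: "0 < num_msgs N R1" for N using num_msgs_pos[OF R(1), of N] by linarith
  have M2pos: "0 < num_msgs N R2" for N using num_msgs_pos[OF R(2), of N] by linarith
  have R2: "R2 = 0"
  proof (rule ccontr)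
    assume "R2 \<noteq> 0"
    then have R2p: "0 < R2" using R by simp
    define N where "N = max N0 (nat \<lceil>1 / R2\<rceil>)"
    have "1 \<le> real N * R2"
    proof -
      have "1 / R2 \<le> real N" unfolding N_def by linarith
      then show ?thesis using R2p by (simp add: field_simps)
    qed
    then have "2 \<le> 2 powr (real N * R2)"
      using powr_mono[of 1 "real N * R2" 2] by simp
    then have "2 \<le> num_msgs N R2" unfolding num_msgs_def by linarith
    then have "1 / 2 \<le> 1 - 1 / real (num_msgs N R2)" by (simp add: field_simps)
    also have "\<dots> \<le> P N" unfolding P_def
      by (rule conv2[OF mn M1pos M2pos]) (use sec in \<open>simp add: Let_def\<close>)
    finally show False using N0[of N] by (simp add: N_def)
  qed
  have R1: "R1 \<le> real m"
  proof (rule ccontr)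
    assume "\<not> R1 \<le> real m"
    then have d: "0 < R1 - real m" by simp
    define N where "N = max N0 (nat \<lceil>2 / (R1 - real m)\<rceil>)"
    have "2 \<le> real N * (R1 - real m)"
    proof -
      have "2 / (R1 - real m) \<le> real N" unfolding N_def by linarith
      then show ?thesis using d by (simp add: field_simps)
    qed
    then have b4: "4 \<le> 2 powr (real N * (R1 - real m))"
      using powr_mono[of 2 "real N * (R1 - real m)" 2] by simp
    have e: "2 powr (real N * R1) = 2 powr (real (N * m)) * 2 powr (real N * (R1 - real m))"
      by (simp add: powr_add[symmetric] algebra_simps)
    have g: "2 powr (real (N * m)) = 2 ^ (N * m)" by (rule powr_realpow) simp
    have a1: "(1::real) \<le> 2 ^ (N * m)" by simp
    have "(2::real) ^ (N * m) * 4 \<le> 2 ^ (N * m) * 2 powr (real N * (R1 - real m))"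
      using b4 by (intro mult_left_mono) auto
    then have "2 * 2 ^ (N * m) \<le> 2 powr (real N * R1) - 1"
      unfolding e g using a1 by linarith
    then have M1: "2 * 2 ^ (N * m) \<le> real (num_msgs N R1)" using num_msgs_ge[of N R1] by linarith
    have "1 / 2 \<le> 1 - 2 ^ (N * m) / real (num_msgs N R1)"
      using M1 M1pos[of N] by (simp add: field_simps)
    also have "\<dots> \<le> P N" unfolding P_def
      by (rule conv1[OF _ M1pos M2pos]) (use mn in simp)
    finally show False using N0[of N] by (simp add: N_def)
  qed
  show "0 \<le> R1 \<and> R1 \<le> real m \<and> R2 = 0" using R R1 R2 by simp
qed

theorem theorem3:
  fixes m n C :: nat
  assumes "m \<ge> 1"
    and "real n / real m \<ge> 2"
  shows "secrecy_capacity_region m n C = {(R1, R2). 0 \<le> R1 \<and> R1 \<le> real m \<and> R2 = 0}"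
proof -
  have "2 * real m \<le> real n" using assms by (simp add: field_simps)
  then have mn: "2 * m \<le> n" by linarith
  have eq: "{(R1, R2). secrecy_achievable m n C R1 R2} = {(R1, R2). 0 \<le> R1 \<and> R1 \<le> real m \<and> R2 = 0}"
    using achievable_iff[OF assms(1) mn] by auto
  have "{(R1, R2). 0 \<le> R1 \<and> R1 \<le> real m \<and> R2 = (0::real)} = {0..real m} \<times> {0}" by auto
  then have cl: "closed {(R1, R2). 0 \<le> R1 \<and> R1 \<le> real m \<and> R2 = (0::real)}"
    by (simp add: closed_Times)
  show ?thesis unfolding secrecy_capacity_region_def eq using cl by (rule closure_closed)
qed


end
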